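(* There exist quaternary Hermitian LCD codes with parameters $[22,12,7]$, $[23,13,7]$, $[24,14,7]$ and $[25,15,7]$.
   Context: $\mathbb{F}_4=\{0,1,\omega,\omega^2\}$. A quaternary $[n,k,d]$ code is a $k$-dimensional subspace $C\subseteq\mathbb{F}_4^n$ with minimum nonzero Hamming weight $d$. The Hermitian inner product is $\langle x,y\rangle_H=\sum x_i y_i^2$ and $C^{\perp_H}$ is the corresponding dual; $C$ is Hermitian LCD if $C\cap C^{\perp_H}=\{0\}$. *)

theory Defs
  imports "HOL-Analysis.Analysis"
begin

datatype gf4 = Z4 | O4 | W4 | WW4
  (* Z4 = 0, O4 = 1, W4 = omega, WW4 = omega^2 *)

fun gf4_add :: "gf4 \<Rightarrow> gf4 \<Rightarrow> gf4" where
  "gf4_add Z4 y = y"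
| "gf4_add x Z4 = x"
| "gf4_add O4 O4 = Z4" | "gf4_add O4 W4 = WW4" | "gf4_add O4 WW4 = W4"
| "gf4_add W4 O4 = WW4" | "gf4_add W4 W4 = Z4" | "gf4_add W4 WW4 = O4"
| "gf4_add WW4 O4 = W4" | "gf4_add WW4 W4 = O4" | "gf4_add WW4 WW4 = Z4"

fun gf4_mul :: "gf4 \<Rightarrow> gf4 \<Rightarrow> gf4" where
  "gf4_mul Z4 y = Z4"
| "gf4_mul x Z4 = Z4"
| "gf4_mul O4 y = y"
| "gf4_mul x O4 = x"
| "gf4_mul W4 W4 = WW4" | "gf4_mul W4 WW4 = O4"
| "gf4_mul WW4 W4 = O4" | "gf4_mul WW4 WW4 = W4"

fun gf4_inv :: "gf4 \<Rightarrow> gf4" where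
  "gf4_inv Z4 = Z4" | "gf4_inv O4 = O4" | "gf4_inv W4 = WW4" | "gf4_inv WW4 = W4"

lemma gf4_cases_all: "(\<forall>x::gf4. P x) \<longleftrightarrow> P Z4 \<and> P O4 \<and> P W4 \<and> P WW4"
  by (metis gf4.exhaust)

instantiation gf4 :: field
begin
definition "0 = Z4"
definition "1 = O4"
definition "x + y = gf4_add x y"
definition "x * y = gf4_mul x y"
definition "uminus (x::gf4) = x"
definition "x - y = gf4_add x y"
definition "inverse x = gf4_inv x"
definition "x div y = gf4_mul x (gf4_inv y)"
instance
proof
  fix a b c :: gf4
  show "a + b + c = a + (b + c)" unfolding plus_gf4_def
    by (cases a; cases b; cases c) simp_all
  show "a + b = b + a" unfolding plus_gf4_def by (cases a; cases b) simp_all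
  show "0 + a = a" unfolding plus_gf4_def zero_gf4_def by (cases a) simp_all
  show "- a + a = 0" unfolding plus_gf4_def zero_gf4_def uminus_gf4_def by (cases a) simp_all
  show "a - b = a + - b" unfolding plus_gf4_def minus_gf4_def uminus_gf4_def by simp
  show "a * b * c = a * (b * c)" unfolding times_gf4_def
    by (cases a; cases b; cases c) simp_all
  show "a * b = b * a" unfolding times_gf4_def by (cases a; cases b) simp_all
  show "1 * a = a" unfolding times_gf4_def one_gf4_def by (cases a) simp_all
  show "(a + b) * c = a * c + b * c" unfolding times_gf4_def plus_gf4_def
    by (cases a; cases b; cases c) simp_all
  show "(0::gf4) \<noteq> 1" unfolding zero_gf4_def one_gf4_def by simp
  show "a \<noteq> 0 \<Longrightarrow> inverse a * a = 1" unfolding times_gf4_def inverse_gf4_def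
      zero_gf4_def one_gf4_def by (cases a) simp_all
  show "a div b = a * inverse b" unfolding times_gf4_def inverse_gf4_def divide_gf4_def by simp
  show "inverse (0::gf4) = 0" unfolding inverse_gf4_def zero_gf4_def by simp
qed
end

definition hamming_weight :: "gf4 ^ 'n \<Rightarrow> nat" where
  "hamming_weight x = card {i. x $ i \<noteq> 0}"

definition min_weight :: "(gf4 ^ 'n) set \<Rightarrow> nat" where
  "min_weight C = Min (hamming_weight ` (C - {0}))"

definition is_code :: "(gf4 ^ 'n) set \<Rightarrow> nat \<Rightarrow> nat \<Rightarrow> bool" where
  "is_code C k d \<longleftrightarrow> vec.subspace C \<and> vec.dim C = k \<and> C \<noteq> {0} \<and> min_weight C = d"

definition herm_inner :: "gf4 ^ 'n \<Rightarrow> gf4 ^ 'n \<Rightarrow> gf4" where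
  "herm_inner x y = (\<Sum>i\<in>UNIV. x $ i * (y $ i) ^ 2)"

definition herm_dual :: "(gf4 ^ 'n) set \<Rightarrow> (gf4 ^ 'n) set" where
  "herm_dual C = {y. \<forall>x\<in>C. herm_inner x y = 0}"

definition herm_LCD :: "(gf4 ^ 'n) set \<Rightarrow> bool" where
  "herm_LCD C \<longleftrightarrow> C \<inter> herm_dual C = {0}"

end

theory Submission
  imports Defs
begin

lemma gf4_0: "Z4 = 0" by (simp add: zero_gf4_def)
lemma gf4_1: "O4 = 1" by (simp add: one_gf4_def)
lemma gf4_exhaust: "(a::gf4) = 0 \<or> a = 1 \<or> a = W4 \<or> a = WW4"
  by (cases a) (auto simp: zero_gf4_def one_gf4_def)
lemma gf4_char2[simp]: "(a::gf4) + a = 0"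
  by (cases a) (simp_all add: plus_gf4_def zero_gf4_def)
lemma gf4_sq_add: "((a::gf4) + b)^2 = a^2 + b^2"
  by (cases a; cases b) (simp_all add: plus_gf4_def times_gf4_def power2_eq_square zero_gf4_def)

fun vadd :: "gf4 list \<Rightarrow> gf4 list \<Rightarrow> gf4 list" where
  "vadd (x#xs) (y#ys) = (x + y) # vadd xs ys"
| "vadd _ _ = []"
fun smul :: "gf4 \<Rightarrow> gf4 list \<Rightarrow> gf4 list" where
  "smul a [] = []" | "smul a (x#xs) = a * x # smul a xs"
fun wt :: "gf4 list \<Rightarrow> nat" where
  "wt [] = 0" | "wt (x#xs) = (if x = 0 then wt xs else Suc (wt xs))"
fun enc :: "nat \<Rightarrow> gf4 list list \<Rightarrow> gf4 list \<Rightarrow> gf4 list" where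
  "enc n (r#rs) (a#as) = vadd (smul a r) (enc n rs as)"
| "enc n _ _ = replicate n 0"
fun hip :: "gf4 list \<Rightarrow> gf4 list \<Rightarrow> gf4" where
  "hip (x#xs) (y#ys) = x * (y * y) + hip xs ys"
| "hip _ _ = 0"
definition idm :: "nat \<Rightarrow> gf4 list list" where
  "idm k = map (\<lambda>i. map (\<lambda>j. if i = j then 1 else 0) [0..<k]) [0..<k]"
definition sysm :: "nat \<Rightarrow> gf4 list list \<Rightarrow> gf4 list list" where
  "sysm k A = map2 (@) (idm k) A"

lemma length_vadd[simp]: "length (vadd x y) = min (length x) (length y)"
  by (induction x y rule: vadd.induct) auto
lemma nth_vadd[simp]: "i < length x \<Longrightarrow> i < length y \<Longrightarrow> vadd x y ! i = x!i + y!i"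
  by (induction x y arbitrary: i rule: vadd.induct) (auto simp: nth_Cons split: nat.splits)
lemma length_smul[simp]: "length (smul a x) = length x"
  by (induction x) auto
lemma nth_smul[simp]: "i < length x \<Longrightarrow> smul a x ! i = a * x!i"
  by (induction x arbitrary: i) (auto simp: nth_Cons split: nat.splits)
lemma wt_filter: "wt x = length (filter (\<lambda>a. a \<noteq> 0) x)"
  by (induction x) auto
lemma wt_append[simp]: "wt (x @ y) = wt x + wt y"
  by (induction x) auto
lemma wt_card: "wt x = card {i. i < length x \<and> x!i \<noteq> 0}"
  by (simp add: wt_filter length_filter_conv_card)
lemma wt_replicate0[simp]: "wt (replicate n 0) = 0"
  by (induction n) auto
lemma wt_zero_iff: "wt x = 0 \<longleftrightarrow> x = replicate (length x) 0"
  by (induction x) auto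

lemma length_enc[simp]: "\<forall>r\<in>set G. length r = n \<Longrightarrow> length (enc n G m) = n"
  by (induction n G m rule: enc.induct) auto

lemma enc_nth:
  assumes "length m = length G" "\<forall>r\<in>set G. length r = n" "p < n"
  shows "enc n G m ! p = (\<Sum>i<length m. m!i * G!i!p)"
  using assms
proof (induction G arbitrary: m)
  case Nil then show ?case by simp
next
  case (Cons r rs)
  then obtain a as where m: "m = a # as" by (cases m) auto
  have "enc n (r#rs) m ! p = a * r!p + enc n rs as ! p"
    using Cons.prems m by simp
  also have "\<dots> = a * r!p + (\<Sum>i<length as. as!i * rs!i!p)"
    using Cons m by simp
  also have "\<dots> = (\<Sum>i<length m. m!i * (r#rs)!i!p)"
    unfolding m by (simp only: length_Cons sum.lessThan_Suc_shift) simp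
  finally show ?case .
qed

lemma vadd_comm: "vadd x y = vadd y x"
  by (rule nth_equalityI) (auto simp: add.commute)
lemma vadd_assoc: "vadd (vadd x y) z = vadd x (vadd y z)"
  by (rule nth_equalityI) (auto simp: add.assoc)
lemma vadd_zero_left: "length x = n \<Longrightarrow> vadd (replicate n 0) x = x"
  by (rule nth_equalityI) auto
lemma vadd_zero_right: "length x = n \<Longrightarrow> vadd x (replicate n 0) = x"
  by (rule nth_equalityI) auto
lemma smul_zero: "smul 0 x = replicate (length x) 0"
  by (rule nth_equalityI) auto
lemma smul_one: "smul 1 x = x"
  by (rule nth_equalityI) auto
lemma smul_smul: "smul a (smul b x) = smul (a * b) x"
  by (rule nth_equalityI) (auto simp: mult.assoc)
lemma smul_vadd: "smul a (vadd x y) = vadd (smul a x) (smul a y)"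
  by (rule nth_equalityI) (auto simp: distrib_left)
lemma wt_smul: "(c::gf4) \<noteq> 0 \<Longrightarrow> wt (smul c v) = wt v"
  by (induction v) auto

lemma enc_smul:
  assumes "length m = length G" "\<forall>r\<in>set G. length r = n"
  shows "enc n G (smul c m) = smul c (enc n G m)"
  using assms by (intro nth_equalityI) (auto simp: enc_nth sum_distrib_left mult.assoc)
lemma enc_vadd:
  assumes "length x = length G" "length y = length G" "\<forall>r\<in>set G. length r = n"
  shows "enc n G (vadd x y) = vadd (enc n G x) (enc n G y)"
  using assms by (intro nth_equalityI) (auto simp: enc_nth distrib_right sum.distrib)
lemma enc_zero:
  assumes "\<forall>r\<in>set G. length r = n"
  shows "enc n G (replicate (length G) 0) = replicate n 0"
  using assms by (intro nth_equalityI) (auto simp: enc_nth)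

fun allok :: "nat \<Rightarrow> gf4 list list \<Rightarrow> nat \<Rightarrow> nat \<Rightarrow> gf4 list \<Rightarrow> bool" where
  "allok d [] t 0 acc = True"
| "allok d [] t (Suc u) acc = (d \<le> Suc u + wt acc)"
| "allok d (r#rs) 0 u acc = allok d rs 0 u acc"
| "allok d (r#rs) (Suc t) 0 acc = (allok d rs (Suc t) 0 acc \<and> allok d rs t (Suc 0) (vadd r acc))"
| "allok d (r#rs) (Suc t) (Suc u) acc = (allok d rs (Suc t) (Suc u) acc \<and>
     allok d rs t (Suc (Suc u)) (vadd r acc) \<and>
     allok d rs t (Suc (Suc u)) (vadd (smul W4 r) acc) \<and>
     allok d rs t (Suc (Suc u)) (vadd (smul WW4 r) acc))"

lemma allok_sound1:
  assumes "allok d A t (Suc u) acc" "\<forall>r\<in>set A. length r = n" "length acc = n"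
    "length m = length A" "wt m \<le> t"
  shows "d \<le> Suc u + wt m + wt (vadd (enc n A m) acc)"
  using assms
proof (induction A arbitrary: t u acc m)
  case Nil
  then show ?case by (simp add: vadd_zero_left)
next
  case (Cons r rs)
  then obtain a as where m: "m = a # as" by (cases m) auto
  have lr: "length r = n" and lrs: "\<forall>r\<in>set rs. length r = n" using Cons.prems by auto
  have las: "length as = length rs" using Cons.prems m by simp
  have enc_eq: "enc n (r#rs) m = vadd (smul a r) (enc n rs as)" using m by simp
  show ?case
  proof (cases "a = 0")
    case True
    have e: "enc n (r#rs) m = enc n rs as"
      using enc_eq True lr lrs by (simp add: smul_zero vadd_zero_left)
    have w: "wt m = wt as" using m True by simp
    have "allok d rs t (Suc u) acc"
      using Cons.prems(1) by (cases t) auto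
    then have "d \<le> Suc u + wt as + wt (vadd (enc n rs as) acc)"
      using Cons.IH[of t u acc as] Cons.prems lrs las w by simp
    then show ?thesis using e w by simp
  next
    case False
    then obtain t' where t: "t = Suc t'" using Cons.prems(5) m by (cases t) auto
    have w: "wt m = Suc (wt as)" using m False by simp
    have br: "allok d rs t' (Suc (Suc u)) (vadd (smul a r) acc)"
      using Cons.prems(1) False gf4_exhaust[of a] t by (auto simp: smul_one)
    have "d \<le> Suc (Suc u) + wt as + wt (vadd (enc n rs as) (vadd (smul a r) acc))"
      using Cons.IH[OF br lrs] Cons.prems las w t lr by simp
    also have "vadd (enc n rs as) (vadd (smul a r) acc) = vadd (enc n (r#rs) m) acc"
      using enc_eq by (metis vadd_assoc vadd_comm)
    finally show ?thesis using w by simp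
  qed
qed

lemma allok_sound0:
  assumes "allok d A t 0 (replicate n 0)" "\<forall>r\<in>set A. length r = n"
    "length m = length A" "wt m \<le> t" "wt m \<noteq> 0"
  shows "d \<le> wt m + wt (enc n A m)"
  using assms
proof (induction A arbitrary: t m)
  case Nil
  then show ?case by simp
next
  case (Cons r rs)
  then obtain a as where m: "m = a # as" by (cases m) auto
  have lr: "length r = n" and lrs: "\<forall>r\<in>set rs. length r = n" using Cons.prems by auto
  have las: "length as = length rs" using Cons.prems m by simp
  have enc_eq: "enc n (r#rs) m = vadd (smul a r) (enc n rs as)" using m by simp
  obtain t' where t: "t = Suc t'" using Cons.prems(4,5) by (cases t) auto
  show ?case
  proof (cases "a = 0")
    case True
    have e: "enc n (r#rs) m = enc n rs as"
      using enc_eq True lr lrs by (simp add: smul_zero vadd_zero_left)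
    have w: "wt m = wt as" using m True by simp
    have "allok d rs t 0 (replicate n 0)"
      using Cons.prems(1) t by simp
    then have "d \<le> wt as + wt (enc n rs as)"
      using Cons.IH[of t as] Cons.prems lrs las w by simp
    then show ?thesis using e w by simp
  next
    case False
    define as' where "as' = smul (inverse a) as"
    have w: "wt m = Suc (wt as)" using m False by simp
    have w': "wt as' = wt as" using False by (simp add: as'_def wt_smul)
    have br: "allok d rs t' (Suc 0) (vadd r (replicate n 0))"
      using Cons.prems(1) t by simp
    have le: "d \<le> Suc 0 + wt as' + wt (vadd (enc n rs as') (vadd r (replicate n 0)))"
      by (rule allok_sound1[OF br lrs]) (use Cons.prems las w w' t lr as'_def in auto)
    have z: "vadd r (replicate n 0) = r" using lr by (simp add: vadd_zero_right)
    have "enc n rs as = smul a (enc n rs as')"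
      using False las lrs by (simp add: as'_def enc_smul smul_smul smul_one)
    then have "enc n (r#rs) m = smul a (vadd (enc n rs as') r)"
      using enc_eq by (simp add: smul_vadd vadd_comm)
    then have "wt (enc n (r#rs) m) = wt (vadd (enc n rs as') r)"
      using False by (simp add: wt_smul)
    then show ?thesis using w w' le z by simp
  qed
qed

lemma length_idm[simp]: "length (idm k) = k" by (simp add: idm_def)
lemma idm_nth: "i < k \<Longrightarrow> j < k \<Longrightarrow> idm k ! i ! j = (if i = j then 1 else 0)"
  by (simp add: idm_def)
lemma length_idm_row: "i < k \<Longrightarrow> length (idm k ! i) = k" by (simp add: idm_def)
lemma length_sysm[simp]: "length A = k \<Longrightarrow> length (sysm k A) = k"
  by (simp add: sysm_def)
lemma sysm_nth: "length A = k \<Longrightarrow> i < k \<Longrightarrow> sysm k A ! i = idm k ! i @ A ! i"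
  by (simp add: sysm_def)
lemma sysm_rows: "length A = k \<Longrightarrow> \<forall>r\<in>set A. length r = n \<Longrightarrow> \<forall>r\<in>set (sysm k A). length r = k + n"
proof
  fix r assume as: "length A = k" "\<forall>r\<in>set A. length r = n" "r \<in> set (sysm k A)"
  then obtain i where i: "i < k" "r = sysm k A ! i" by (auto simp: in_set_conv_nth)
  then have "r = idm k ! i @ A ! i" using as sysm_nth by simp
  moreover have "A ! i \<in> set A" using i as by simp
  ultimately show "length r = k + n" using as i length_idm_row by simp
qed

lemma enc_sys:
  assumes "length m = k" "length A = k" "\<forall>r\<in>set A. length r = n"
  shows "enc (k + n) (sysm k A) m = m @ enc n A m"
proof (rule nth_equalityI)
  have rows: "\<forall>r\<in>set (sysm k A). length r = k + n" using sysm_rows assms by blast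
  show "length (enc (k + n) (sysm k A) m) = length (m @ enc n A m)"
    using rows assms by simp
  fix p assume "p < length (enc (k + n) (sysm k A) m)"
  then have p: "p < k + n" using rows by simp
  have rowA: "i < k \<Longrightarrow> length (A!i) = n" for i using assms by auto
  have "enc (k + n) (sysm k A) m ! p = (\<Sum>i<k. m!i * sysm k A!i!p)"
    using enc_nth[OF _ rows p] assms by simp
  also have "\<dots> = (\<Sum>i<k. m!i * (if p < k then (if i = p then 1 else 0) else A!i!(p-k)))"
    using assms by (intro sum.cong) (auto simp: sysm_nth nth_append length_idm_row idm_nth)
  also have "\<dots> = (m @ enc n A m) ! p"
  proof (cases "p < k")
    case True then show ?thesis using assms by (simp add: nth_append if_distrib[of "(*) _"] sum.delta cong: if_cong)
  next
    case False
    then have "(m @ enc n A m) ! p = enc n A m ! (p - k)" using assms by (simp add: nth_append)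
    also have "\<dots> = (\<Sum>i<k. m!i * A!i!(p-k))" using enc_nth[of m A n "p-k"] assms p False by simp
    finally show ?thesis using False by simp
  qed
  finally show "enc (k + n) (sysm k A) m ! p = (m @ enc n A m) ! p" .
qed

lemma take_vadd: "take n (vadd x y) = vadd (take n x) (take n y)"
  by (rule nth_equalityI) auto
lemma drop_vadd: "drop n (vadd x y) = vadd (drop n x) (drop n y)"
proof (rule nth_equalityI)
  fix i assume "i < length (drop n (vadd x y))"
  then have "n + i < length x" "n + i < length y" by auto
  then show "drop n (vadd x y) ! i = vadd (drop n x) (drop n y) ! i" by simp
qed simp
lemma append_vadd: "length a = length c \<Longrightarrow> vadd (a @ b) (c @ d) = vadd a c @ vadd b d"
  by (rule nth_equalityI) (auto simp: nth_append)
lemma take_smul: "take n (smul a x) = smul a (take n x)"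
  by (rule nth_equalityI) auto
lemma drop_smul: "drop n (smul a x) = smul a (drop n x)"
  by (rule nth_equalityI) auto
lemma append_smul: "smul a (x @ y) = smul a x @ smul a y"
  by (rule nth_equalityI) (auto simp: nth_append)

lemma lin_closed:
  assumes rows: "\<forall>r\<in>set G. length r = N"
    and fadd: "\<And>x y. length x = N \<Longrightarrow> length y = N \<Longrightarrow> f (vadd x y) = vadd (f x) (f y)"
    and gadd: "\<And>x y. length x = N \<Longrightarrow> length y = N \<Longrightarrow> g (vadd x y) = vadd (g x) (g y)"
    and fsm: "\<And>a x. length x = N \<Longrightarrow> f (smul a x) = smul a (f x)"
    and gsm: "\<And>a x. length x = N \<Longrightarrow> g (smul a x) = smul a (g x)"
    and z: "f (replicate N 0) = g (replicate N 0)"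
    and rw: "\<forall>r\<in>set G. f r = g r"
  shows "f (enc N G m) = g (enc N G m)"
  using rows rw
proof (induction G arbitrary: m)
  case Nil then show ?case using z by simp
next
  case (Cons r rs)
  note IH = Cons.IH and pr = Cons.prems
  show ?case
  proof (cases m)
    case Nil then show ?thesis using z by simp
  next
    case (Cons a as)
    have lr: "length r = N" and le: "length (enc N rs as) = N" and lrs: "\<forall>r\<in>set rs. length r = N"
      using pr by auto
    have e: "enc N (r # rs) m = vadd (smul a r) (enc N rs as)" using Cons by simp
    have 1: "f (vadd (smul a r) (enc N rs as)) = vadd (f (smul a r)) (f (enc N rs as))"
      using fadd lr le by simp
    have 2: "f (smul a r) = smul a (f r)" using fsm lr by simp
    have 3: "f r = g r" using pr by simp
    have 4: "f (enc N rs as) = g (enc N rs as)" using IH lrs pr by simp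
    have 5: "smul a (g r) = g (smul a r)" using gsm lr by simp
    have 6: "vadd (g (smul a r)) (g (enc N rs as)) = g (vadd (smul a r) (enc N rs as))"
      using gadd lr le by simp
    show ?thesis unfolding e 1 2 3 4 5 6 ..
  qed
qed

definition "blk1 v = take 5 v"
definition "blk2 v = take 5 (drop 5 v)"
definition "blk3 v = take 5 (drop 10 v)"
definition "red v = drop 15 (v::gf4 list)"
lemmas blk_defs = blk1_def blk2_def blk3_def red_def

lemma branch:
  assumes ok: "allok 7 Aj 3 0 (replicate 10 0)" and lA: "length Aj = 15" and rA: "\<forall>r\<in>set Aj. length r = 10"
    and ov: "ov = enc 10 Aj x" and lx: "length x = 15" and wx: "wt x \<le> 3" and nz: "wt x + wt ov \<noteq> 0"
  shows "7 \<le> wt x + wt ov"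
proof (cases "wt x = 0")
  case True
  then have "x = replicate 15 0" using wt_zero_iff[of x] lx by simp
  then have "ov = replicate 10 0" using ov enc_zero[OF rA] lA by simp
  then show ?thesis using nz True by simp
next
  case False
  show ?thesis using allok_sound0[OF ok rA _ _ False] lx lA wx ov by (simp add: numeral_eq_Suc)
qed

lemma core25:
  fixes A1 A2 A3 A4 :: "gf4 list list"
  assumes l: "length A1 = 15" "length A2 = 15" "length A3 = 15" "length A4 = 15"
    and r: "\<forall>r\<in>set A1. length r = 10" "\<forall>r\<in>set A2. length r = 10"
           "\<forall>r\<in>set A3. length r = 10" "\<forall>r\<in>set A4. length r = 10"
    and ok: "allok 7 A1 3 0 (replicate 10 0)" "allok 7 A2 3 0 (replicate 10 0)"
            "allok 7 A3 3 0 (replicate 10 0)" "allok 7 A4 3 0 (replicate 10 0)"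
    and c1: "\<forall>v\<in>set (sysm 15 A1). blk2 v @ blk3 v = enc 10 A2 (blk1 v @ red v)"
    and c2: "\<forall>v\<in>set (sysm 15 A1). blk1 v @ blk3 v = enc 10 A3 (blk2 v @ red v)"
    and c3: "\<forall>v\<in>set (sysm 15 A1). blk1 v @ blk2 v = enc 10 A4 (blk3 v @ red v)"
    and m: "length m = 15" "m \<noteq> replicate 15 0"
  shows "7 \<le> wt m + wt (enc 10 A1 m)"
proof -
  have rows: "\<forall>r\<in>set (sysm 15 A1). length r = 25" using sysm_rows[OF l(1) r(1)] by simp
  define R where "R = enc 10 A1 m"
  have lR: "length R = 10" using r(1) by (simp add: R_def)
  have c: "enc 25 (sysm 15 A1) m = m @ R"
    using enc_sys[OF m(1) l(1) r(1)] by (simp add: R_def)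
  define b1 where "b1 = take 5 m"
  define b2 where "b2 = take 5 (drop 5 m)"
  define b3 where "b3 = take 5 (drop 10 m)"
  have mb: "m = b1 @ b2 @ b3" unfolding b1_def b2_def b3_def
  proof -
    have "drop 5 m = take 5 (drop 5 m) @ drop 5 (drop 5 m)" by (rule append_take_drop_id[symmetric])
    then have "drop 5 m = take 5 (drop 5 m) @ drop 10 m" by simp
    moreover have "drop 10 m = take 5 (drop 10 m)" using m(1) by simp
    ultimately show "m = take 5 m @ take 5 (drop 5 m) @ take 5 (drop 10 m)" by (metis append_take_drop_id)
  qed
  have lb: "length b1 = 5" "length b2 = 5" "length b3 = 5" using m(1) by (auto simp: b1_def b2_def b3_def)
  have bl: "blk1 (m @ R) = b1" "blk2 (m @ R) = b2" "blk3 (m @ R) = b3" "red (m @ R) = R"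
    using m(1) by (auto simp: blk_defs b1_def b2_def b3_def)
  have wm: "wt m = wt b1 + wt b2 + wt b3" using mb by simp
  have wnz: "wt m \<noteq> 0" using m wt_zero_iff[of m] by simp
  have lin: "\<And>x y. length x = 25 \<Longrightarrow> length y = 25 \<Longrightarrow> blkf (vadd x y) = vadd (blkf x) (blkf y)"
    if "blkf \<in> {blk1, blk2, blk3, red}" for blkf
    using that by (auto simp: blk_defs take_vadd drop_vadd)
  have sl: "\<And>a x. blkf (smul a x) = smul a (blkf x)" if "blkf \<in> {blk1, blk2, blk3, red}" for blkf
    using that by (auto simp: blk_defs take_smul drop_smul)
  have lens: "\<And>x. length x = 25 \<Longrightarrow> length (blk1 x) = 5 \<and> length (blk2 x) = 5 \<and> length (blk3 x) = 5 \<and> length (red x) = 10"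
    by (auto simp: blk_defs)
  have gen: "P1 (enc 25 (sysm 15 A1) m) @ P2 (enc 25 (sysm 15 A1) m) = enc 10 Aj (P3 (enc 25 (sysm 15 A1) m) @ red (enc 25 (sysm 15 A1) m))"
    if "P1 \<in> {blk1, blk2, blk3}" "P2 \<in> {blk1, blk2, blk3}" "P3 \<in> {blk1, blk2, blk3}"
       "length Aj = 15" "\<forall>r\<in>set Aj. length r = 10"
       "\<forall>v\<in>set (sysm 15 A1). P1 v @ P2 v = enc 10 Aj (P3 v @ red v)" for P1 P2 P3 Aj
  proof (rule lin_closed[OF rows, where f = "\<lambda>v. P1 v @ P2 v" and g = "\<lambda>v. enc 10 Aj (P3 v @ red v)"])
    fix x y :: "gf4 list" assume xy: "length x = 25" "length y = 25"
    show "P1 (vadd x y) @ P2 (vadd x y) = vadd (P1 x @ P2 x) (P1 y @ P2 y)"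
      using lin[of P1, OF _ xy] lin[of P2, OF _ xy] that lens[OF xy(1)] lens[OF xy(2)]
      by (auto simp: append_vadd)
    have ap: "P3 (vadd x y) @ red (vadd x y) = vadd (P3 x @ red x) (P3 y @ red y)"
      using lin[of P3, OF _ xy] lin[of red, OF _ xy] that(3) lens[OF xy(1)] lens[OF xy(2)]
      by (auto simp: append_vadd)
    have l3: "length (P3 x @ red x) = length Aj" "length (P3 y @ red y) = length Aj"
      using that(3,4) lens[OF xy(1)] lens[OF xy(2)] by auto
    show "enc 10 Aj (P3 (vadd x y) @ red (vadd x y)) = vadd (enc 10 Aj (P3 x @ red x)) (enc 10 Aj (P3 y @ red y))"
      unfolding ap by (rule enc_vadd[OF l3 that(5)])
  next
    fix a and x :: "gf4 list" assume x: "length x = 25"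
    show "P1 (smul a x) @ P2 (smul a x) = smul a (P1 x @ P2 x)"
      using sl[of P1] sl[of P2] that by (auto simp: append_smul)
    have ap: "P3 (smul a x) @ red (smul a x) = smul a (P3 x @ red x)"
      using sl[of P3] sl[of red] that(3) by (auto simp: append_smul)
    have l3: "length (P3 x @ red x) = length Aj"
      using that(3,4) lens[OF x] by auto
    show "enc 10 Aj (P3 (smul a x) @ red (smul a x)) = smul a (enc 10 Aj (P3 x @ red x))"
      unfolding ap by (rule enc_smul[OF l3 that(5)])
  next
    have rr: "replicate 5 0 @ replicate 10 0 = (replicate 15 0 :: gf4 list)"
      by (simp add: replicate_add[symmetric])
    have rr2: "replicate 5 0 @ replicate 5 0 = (replicate 10 0 :: gf4 list)"
      by (simp add: replicate_add[symmetric])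
    have "P3 (replicate 25 0) @ red (replicate 25 0) = replicate 15 0" using that(3) rr
      by (auto simp: blk_defs)
    then show "P1 (replicate 25 0) @ P2 (replicate 25 0) = enc 10 Aj (P3 (replicate 25 0) @ red (replicate 25 0))"
      using that enc_zero[of Aj 10] rr2 by (auto simp: blk_defs)
  qed (use that in auto)
  have e1: "b2 @ b3 = enc 10 A2 (b1 @ R)" using gen[of blk2 blk3 blk1 A2] c1 l r c bl by simp
  have e2: "b1 @ b3 = enc 10 A3 (b2 @ R)" using gen[of blk1 blk3 blk2 A3] c2 l r c bl by simp
  have e3: "b1 @ b2 = enc 10 A4 (b3 @ R)" using gen[of blk1 blk2 blk3 A4] c3 l r c bl by simp
  show ?thesis
  proof (cases "wt m \<le> 3")
    case True
    then show ?thesis using allok_sound0[OF ok(1) r(1) _ True wnz] m l by (simp add: R_def)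
  next
    case False
    show ?thesis
    proof (rule ccontr)
      assume "\<not> 7 \<le> wt m + wt (enc 10 A1 m)"
      then have w6: "wt m + wt R \<le> 6" by (simp add: R_def)
      have "wt b1 + wt R \<le> 3 \<or> wt b2 + wt R \<le> 3 \<or> wt b3 + wt R \<le> 3"
        using w6 wm False by linarith
      moreover have "7 \<le> wt (b1 @ R) + wt (b2 @ b3)" if "wt b1 + wt R \<le> 3"
        by (rule branch[OF ok(2) l(2) r(2) e1]) (use that lb lR wnz wm in auto)
      moreover have "7 \<le> wt (b2 @ R) + wt (b1 @ b3)" if "wt b2 + wt R \<le> 3"
        by (rule branch[OF ok(3) l(3) r(3) e2]) (use that lb lR wnz wm in auto)
      moreover have "7 \<le> wt (b3 @ R) + wt (b1 @ b2)" if "wt b3 + wt R \<le> 3"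
        by (rule branch[OF ok(4) l(4) r(4) e3]) (use that lb lR wnz wm in auto)
      ultimately show False using w6 wm by auto
    qed
  qed
qed

lemma UNIV_gf4: "(UNIV :: gf4 set) = {Z4, O4, W4, WW4}"
  using gf4.exhaust by auto
lemma finite_gf4: "finite (UNIV :: gf4 set)"
  by (simp add: UNIV_gf4)

definition pos :: "'n::enum \<Rightarrow> nat" where
  "pos x = the_inv_into {..<length (enum_class.enum :: 'n list)} (nth enum_class.enum) x"

lemma bij_enum: "bij_betw (nth (enum_class.enum :: 'n::enum list)) {..<length (enum_class.enum :: 'n list)} UNIV"
  by (rule bij_betw_nth) (simp_all add: enum_distinct UNIV_enum)

lemma pos_lt: "pos (x::'n::enum) < length (enum_class.enum :: 'n list)"
  unfolding pos_def using bij_enum[where 'n='n]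
  by (metis UNIV_I bij_betw_def lessThan_iff the_inv_into_into subset_refl)
lemma enum_pos: "(enum_class.enum :: 'n::enum list) ! pos x = x"
  unfolding pos_def using bij_enum[where 'n='n]
  by (metis UNIV_I bij_betw_def f_the_inv_into_f)
lemma pos_enum: "j < length (enum_class.enum :: 'n::enum list) \<Longrightarrow> pos ((enum_class.enum :: 'n list) ! j) = j"
  unfolding pos_def using bij_enum[where 'n='n]
  by (metis bij_betw_def lessThan_iff the_inv_into_f_f)

definition lv :: "gf4 list \<Rightarrow> gf4 ^ 'n::enum" where
  "lv l = (\<chi> i. l ! pos i)"

lemma len_enum: "length (enum_class.enum :: 'n::enum list) = CARD('n)"
  by (simp add: card_UNIV_length_enum)

lemma lv_add: "length x = CARD('n::enum) \<Longrightarrow> length y = CARD('n) \<Longrightarrow> (lv (vadd x y) :: gf4^'n::enum) = lv x + lv y"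
  by (simp add: lv_def vec_eq_iff pos_lt[where 'n='n, unfolded len_enum])
lemma lv_smul: "length x = CARD('n::enum) \<Longrightarrow> (lv (smul a x) :: gf4^'n::enum) = a *s lv x"
  by (simp add: lv_def vec_eq_iff pos_lt[where 'n='n, unfolded len_enum])
lemma lv_zero: "(lv (replicate CARD('n::enum) 0) :: gf4^'n::enum) = 0"
  by (simp add: lv_def vec_eq_iff pos_lt[where 'n='n, unfolded len_enum])
lemma lv_inj:
  assumes "length x = CARD('n::enum)" "length y = CARD('n)" "(lv x :: gf4^'n::enum) = lv y"
  shows "x = y"
proof (rule nth_equalityI)
  show "length x = length y" using assms by simp
  fix j assume j: "j < length x"
  have "lv x $ ((enum_class.enum :: 'n list) ! j) = lv y $ ((enum_class.enum :: 'n list) ! j)"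
    using assms by simp
  then show "x ! j = y ! j" using j assms pos_enum[where 'n='n] len_enum[where 'n='n]
    by (simp add: lv_def)
qed

lemma hw_lv:
  assumes "length x = CARD('n::enum)"
  shows "hamming_weight (lv x :: gf4^'n::enum) = wt x"
proof -
  let ?e = "enum_class.enum :: 'n list"
  have "{i::'n. lv x $ i \<noteq> 0} = (nth ?e) ` {j. j < length x \<and> x!j \<noteq> 0}"
  proof (intro set_eqI iffI)
    fix i :: 'n assume "i \<in> {i. lv x $ i \<noteq> 0}"
    then show "i \<in> (nth ?e) ` {j. j < length x \<and> x!j \<noteq> 0}"
      using pos_lt[of i] enum_pos[of i] assms len_enum[where 'n='n]
      by (auto simp: lv_def image_iff intro!: exI[of _ "pos i"])
  next
    fix i :: 'n assume "i \<in> (nth ?e) ` {j. j < length x \<and> x!j \<noteq> 0}"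
    then show "i \<in> {i. lv x $ i \<noteq> 0}"
      using pos_enum[where 'n='n] assms len_enum[where 'n='n] by (auto simp: lv_def)
  qed
  moreover have "inj_on (nth ?e) {j. j < length x \<and> x!j \<noteq> 0}"
    using bij_enum[where 'n='n] assms len_enum[where 'n='n]
    by (auto simp: bij_betw_def intro: inj_on_subset)
  ultimately show ?thesis
    by (simp add: hamming_weight_def card_image wt_card)
qed

lemma hip_nth: "length x = length y \<Longrightarrow> hip x y = (\<Sum>p<length x. x!p * (y!p * y!p))"
proof (induction x y rule: hip.induct)
  case (1 x xs y ys)
  then show ?case by (simp add: sum.lessThan_Suc_shift del: sum.lessThan_Suc)
qed auto

lemma herm_lv:
  assumes "length x = CARD('n::enum)" "length y = CARD('n)"
  shows "herm_inner (lv x :: gf4^'n::enum) (lv y) = hip x y"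
proof -
  let ?e = "enum_class.enum :: 'n list"
  have "herm_inner (lv x :: gf4^('n::enum)) (lv y) = (\<Sum>i\<in>(UNIV::'n set). x ! pos i * (y ! pos i * y ! pos i))"
    by (simp add: herm_inner_def lv_def power2_eq_square)
  also have "\<dots> = (\<Sum>j<length ?e. x ! pos (?e ! j) * (y ! pos (?e ! j) * y ! pos (?e ! j)))"
    by (rule sum.reindex_bij_betw[OF bij_enum, symmetric])
  also have "\<dots> = (\<Sum>j<length x. x ! j * (y ! j * y ! j))"
    using assms len_enum[where 'n='n] pos_enum[where 'n='n] by (intro sum.cong) auto
  finally show ?thesis using hip_nth assms by simp
qed

lemma lv_enc:
  assumes "\<forall>r\<in>set G. length r = CARD('n::enum)" "length m = length G"
  shows "(lv (enc CARD('n) G m) :: gf4^'n::enum) = (\<Sum>i<length G. m!i *s lv (G!i))"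
  using assms
proof (induction G arbitrary: m)
  case Nil then show ?case by (simp add: lv_zero)
next
  case (Cons r rs)
  then obtain a as where m: "m = a # as" by (cases m) auto
  have "(lv (enc CARD('n) (r#rs) m) :: gf4^('n::enum)) = a *s lv r + lv (enc CARD('n) rs as)"
    using Cons.prems m by (simp add: lv_add lv_smul)
  also have "lv (enc CARD('n) rs as) = (\<Sum>i<length rs. as!i *s (lv (rs!i) :: gf4^('n::enum)))"
    using Cons m by simp
  finally show ?case using m by (simp add: sum.lessThan_Suc_shift del: sum.lessThan_Suc)
qed

definition gram :: "gf4 list list \<Rightarrow> gf4 list list" where
  "gram G = map (\<lambda>x. map (\<lambda>y. hip x y) G) G"

lemma gf4_sq_add': "((a::gf4) + b) * (a + b) = a * a + b * b"
  using gf4_sq_add[of a b] by (simp add: power2_eq_square)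

lemma sq_sum: "finite I \<Longrightarrow> (\<Sum>i\<in>I. f i) * (\<Sum>i\<in>I. f i) = (\<Sum>i\<in>I. (f i :: gf4) * f i)"
  by (induction I rule: finite_induct) (simp_all add: gf4_sq_add')

lemma hip_enc:
  assumes "length x = n" "\<forall>r\<in>set G. length r = n" "length m = length G"
  shows "hip x (enc n G m) = (\<Sum>i<length G. (m!i * m!i) * hip x (G!i))"
proof -
  have "hip x (enc n G m) = (\<Sum>p<n. x!p * (enc n G m ! p * enc n G m ! p))"
    using assms by (simp add: hip_nth)
  also have "\<dots> = (\<Sum>p<n. x!p * (\<Sum>i<length G. (m!i * G!i!p) * (m!i * G!i!p)))"
    using assms by (intro sum.cong refl) (simp add: enc_nth sq_sum)
  also have "\<dots> = (\<Sum>p<n. \<Sum>i<length G. (m!i * m!i) * (x!p * (G!i!p * G!i!p)))"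
    by (simp add: sum_distrib_left ac_simps)
  also have "\<dots> = (\<Sum>i<length G. \<Sum>p<n. (m!i * m!i) * (x!p * (G!i!p * G!i!p)))"
    by (rule sum.swap)
  also have "\<dots> = (\<Sum>i<length G. (m!i * m!i) * hip x (G!i))"
    using assms by (intro sum.cong refl) (simp add: hip_nth sum_distrib_left)
  finally show ?thesis .
qed

lemma gf4_sq_zero: "(a::gf4) * a = 0 \<Longrightarrow> a = 0" by simp

theorem code_generic:
  fixes A N :: "gf4 list list" and mw :: "gf4 list"
  assumes L: "CARD('n::enum) = k + r"
   and lA: "length A = k" and rA: "\<forall>x\<in>set A. length x = r" and k0: "0 < k"
   and dist: "\<forall>m. length m = k \<longrightarrow> m \<noteq> replicate k 0 \<longrightarrow> d \<le> wt (enc (k+r) (sysm k A) m)"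
   and wl: "length mw = k" and ww: "wt (enc (k+r) (sysm k A) mw) = d" and d0: "0 < d"
   and lN: "length N = k" "\<forall>x\<in>set N. length x = k"
   and inv: "map (enc k (gram (sysm k A))) N = idm k"
  shows "\<exists>C :: (gf4^('n::enum)) set. is_code C k d \<and> herm_LCD C"
proof -
  define G where "G = sysm k A"
  define n where "n = k + r"
  have nC: "CARD('n::enum) = n" using L n_def by simp
  have lG: "length G = k" using lA by (simp add: G_def)
  have rows: "\<forall>x\<in>set G. length x = n" using sysm_rows[OF lA rA] by (simp add: G_def n_def)
  have rowi: "i < k \<Longrightarrow> length (G!i) = n" for i using rows lG by auto
  have encs: "length m = k \<Longrightarrow> enc n G m = m @ enc r A m" for m
    using enc_sys[OF _ lA rA] by (simp add: G_def n_def)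
  have enc0: "length m = k \<Longrightarrow> enc n G m = replicate n 0 \<Longrightarrow> m = replicate k 0" for m
  proof -
    assume m: "length m = k" "enc n G m = replicate n 0"
    then have "take k (enc n G m) = replicate k 0" by (simp add: n_def)
    then show "m = replicate k 0" using encs[OF m(1)] m(1) by simp
  qed
  have Gdiag: "i < k \<Longrightarrow> j < k \<Longrightarrow> G!i!j = (if i = j then 1 else 0)" for i j
    using lA by (simp add: G_def sysm_nth nth_append length_idm_row idm_nth)
  define \<rho> :: "nat \<Rightarrow> gf4^('n::enum)" where "\<rho> i = lv (G!i)" for i
  define B where "B = \<rho> ` {..<k}"
  have setG: "set G = (nth G) ` {..<k}" using lG by (auto simp: in_set_conv_nth)
  have inj: "inj_on \<rho> {..<k}"
  proof (rule inj_onI)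
    fix i j assume ij: "i \<in> {..<k}" "j \<in> {..<k}" "\<rho> i = \<rho> j"
    then have "G!i = G!j" using lv_inj[of "G!i" "G!j", where 'n='n] rowi nC by (simp add: \<rho>_def)
    then have "G!i!i = G!j!i" by simp
    then show "i = j" using Gdiag ij by (auto split: if_splits)
  qed
  have finB: "finite B" by (simp add: B_def)
  have sumB: "(\<Sum>v\<in>B. c v *s v) = lv (enc n G (map (\<lambda>i. c (\<rho> i)) [0..<k]))" for c
  proof -
    have "(\<Sum>v\<in>B. c v *s v) = (\<Sum>i<k. c (\<rho> i) *s \<rho> i)"
      unfolding B_def by (simp add: sum.reindex[OF inj])
    also have "\<dots> = lv (enc n G (map (\<lambda>i. c (\<rho> i)) [0..<k]))"
      using lv_enc[of G "map (\<lambda>i. c (\<rho> i)) [0..<k]", where 'n='n] rows nC lG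
      by (simp add: \<rho>_def)
    finally show ?thesis .
  qed
  define C where "C = vec.span B"
  have memC: "x \<in> C \<longleftrightarrow> (\<exists>m. length m = k \<and> x = lv (enc n G m))" for x
  proof
    assume "x \<in> C"
    then obtain u where "x = (\<Sum>v\<in>B. u v *s v)" unfolding C_def using vec.span_finite[OF finB] by auto
    then have "x = lv (enc n G (map (\<lambda>i. u (\<rho> i)) [0..<k]))" using sumB by simp
    then show "\<exists>m. length m = k \<and> x = lv (enc n G m)"
      by (intro exI[of _ "map (\<lambda>i. u (\<rho> i)) [0..<k]"]) simp
  next
    assume "\<exists>m. length m = k \<and> x = lv (enc n G m)"
    then obtain m where m: "length m = k" "x = lv (enc n G m)" by auto
    then have "x = (\<Sum>i<k. m!i *s \<rho> i)"
      using lv_enc[of G m, where 'n='n] rows nC lG by (simp add: \<rho>_def)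
    also have "\<dots> \<in> C" unfolding C_def B_def
      by (intro vec.span_sum vec.span_scale vec.span_base) auto
    finally show "x \<in> C" .
  qed
  have indep: "vec.independent B"
    unfolding vec.independent_explicit
  proof (intro conjI finB allI impI ballI)
    fix c v assume s: "(\<Sum>v\<in>B. c v *s v) = 0" and v: "v \<in> B"
    define mc where "mc = map (\<lambda>i. c (\<rho> i)) [0..<k]"
    have "lv (enc n G mc) = (lv (replicate n 0) :: gf4^('n::enum))"
      using s sumB lv_zero[where 'n='n] nC by (simp add: mc_def)
    then have "enc n G mc = replicate n 0"
      using lv_inj[where 'n='n] rows nC by (simp add: mc_def)
    then have "mc = replicate k 0" using enc0 by (simp add: mc_def)
    moreover obtain i where "i < k" "v = \<rho> i" using v B_def by auto
    moreover have "\<And>i. i < k \<Longrightarrow> mc ! i = c (\<rho> i)" by (simp add: mc_def)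
    ultimately show "c v = 0" by (metis nth_replicate)
  qed
  have dimC: "vec.dim C = k"
    unfolding C_def using vec.dim_span_eq_card_independent[OF indep]
    by (simp add: B_def card_image[OF inj])
  have zeroC: "0 \<in> C" unfolding C_def by (rule vec.span_zero)
  have rhoC: "i < k \<Longrightarrow> \<rho> i \<in> C" for i unfolding C_def B_def by (intro vec.span_base) auto
  have rho0: "\<rho> 0 \<noteq> 0"
  proof
    assume "\<rho> 0 = 0"
    then have "G!0 = replicate n 0"
      using lv_inj[of "G!0" "replicate n 0", where 'n='n] lv_zero[where 'n='n] rowi[OF k0] nC
      by (simp add: \<rho>_def)
    moreover have "0 < n" using k0 by (simp add: n_def)
    ultimately have "G!0!0 = 0" by simp
    then show False using Gdiag[OF k0 k0] by simp
  qed
  have finC: "finite C"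
  proof -
    have "C \<subseteq> (\<lambda>m. lv (enc n G m)) ` {m. set m \<subseteq> UNIV \<and> length m = k}"
      using memC by auto
    moreover have "finite {m :: gf4 list. set m \<subseteq> UNIV \<and> length m = k}"
      by (rule finite_lists_length_eq[OF finite_gf4])
    ultimately have "finite ((\<lambda>m. lv (enc n G m) :: gf4^('n::enum)) ` {m. set m \<subseteq> UNIV \<and> length m = k})"
      by (intro finite_imageI)
    with \<open>C \<subseteq> _\<close> show ?thesis by (rule finite_subset)
  qed
  have hw0: "hamming_weight (0 :: gf4^('n::enum)) = 0" by (simp add: hamming_weight_def)
  have mwC: "min_weight C = d"
    unfolding min_weight_def
  proof (rule Min_eqI)
    show "finite (hamming_weight ` (C - {0}))" using finC by simp
  next
    fix y assume "y \<in> hamming_weight ` (C - {0})"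
    then obtain x where x: "x \<in> C" "x \<noteq> 0" "y = hamming_weight x" by auto
    then obtain m where m: "length m = k" "x = lv (enc n G m)" using memC by auto
    have "m \<noteq> replicate k 0"
    proof
      assume "m = replicate k 0"
      then have "enc n G m = replicate n 0" using enc_zero[OF rows] lG by simp
      then show False using x m lv_zero[where 'n='n] nC by simp
    qed
    then have "d \<le> wt (enc n G m)" using dist m by (simp add: G_def n_def)
    moreover have "hamming_weight x = wt (enc n G m)" using m hw_lv[where 'n='n] rows nC by simp
    ultimately show "d \<le> y" using x by simp
  next
    define xw where "xw = (lv (enc n G mw) :: gf4^('n::enum))"
    have "hamming_weight xw = d" using hw_lv[where 'n='n] rows nC ww by (simp add: xw_def G_def n_def)
    moreover have "xw \<noteq> 0" using \<open>hamming_weight xw = d\<close> d0 hw0 by auto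
    moreover have "xw \<in> C" using memC wl by (auto simp: xw_def)
    ultimately show "d \<in> hamming_weight ` (C - {0})" by (intro image_eqI[of _ _ xw]) auto
  qed
  have lcd: "C \<inter> herm_dual C = {0}"
  proof
    show "{0} \<subseteq> C \<inter> herm_dual C"
      using zeroC by (simp add: herm_dual_def herm_inner_def)
  next
    show "C \<inter> herm_dual C \<subseteq> {0}"
    proof
      fix y assume y: "y \<in> C \<inter> herm_dual C"
      then obtain m where m: "length m = k" "y = lv (enc n G m)" using memC by auto
      define s where "s i = m!i * m!i" for i
      define M where "M = gram G"
      have Mij: "i < k \<Longrightarrow> j < k \<Longrightarrow> M!j!i = hip (G!j) (G!i)" for i j
        using lG by (simp add: M_def gram_def)
      have lM: "length M = k" "\<forall>x\<in>set M. length x = k" using lG by (auto simp: M_def gram_def)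
      have orth: "(\<Sum>i<k. M!j!i * s i) = 0" if j: "j < k" for j
      proof -
        have "herm_inner (\<rho> j) y = 0" using y rhoC[OF j] by (simp add: herm_dual_def)
        then have "hip (G!j) (enc n G m) = 0"
          using herm_lv[where 'n='n] rowi[OF j] rows m nC by (simp add: \<rho>_def)
        then show ?thesis using hip_enc[of "G!j" n G m] rowi[OF j] rows m lG Mij j
          by (simp add: s_def mult.commute)
      qed
      have "m!l = 0" if l: "l < k" for l
      proof -
        have Nl: "length (N!l) = k" using lN l by auto
        have "map (enc k M) N ! l = idm k ! l" using inv by (simp add: M_def G_def)
        then have e: "enc k M (N!l) = idm k ! l" using l lN by simp
        have "s l = (\<Sum>i<k. (idm k ! l ! i) * s i)"
          using l by (simp add: idm_nth if_distrib[of "\<lambda>x. x * _"] sum.delta cong: if_cong)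
        also have "\<dots> = (\<Sum>i<k. (\<Sum>j<k. N!l!j * M!j!i) * s i)"
        proof (intro sum.cong refl)
          fix i assume "i \<in> {..<k}"
          then have "enc k M (N!l) ! i = (\<Sum>j<length (N!l). N!l!j * M!j!i)"
            using enc_nth[of "N!l" M k i] Nl lM by simp
          then show "idm k ! l ! i * s i = (\<Sum>j<k. N!l!j * M!j!i) * s i" using e Nl by simp
        qed
        also have "\<dots> = (\<Sum>i<k. \<Sum>j<k. N!l!j * (M!j!i * s i))"
          by (simp add: sum_distrib_right mult.assoc)
        also have "\<dots> = (\<Sum>j<k. \<Sum>i<k. N!l!j * (M!j!i * s i))"
          by (rule sum.swap)
        also have "\<dots> = (\<Sum>j<k. N!l!j * (\<Sum>i<k. M!j!i * s i))"
          by (simp add: sum_distrib_left)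
        also have "\<dots> = 0" using orth by simp
        finally have "m!l * m!l = 0" by (simp add: s_def)
        then show ?thesis by (rule gf4_sq_zero)
      qed
      then have "m = replicate k 0" using m by (intro nth_equalityI) auto
      then have "enc n G m = replicate n 0" using enc_zero[OF rows] lG by simp
      then show "y \<in> {0}" using m lv_zero[where 'n='n] nC by simp
    qed
  qed
  have "vec.subspace C" unfolding C_def by (rule vec.subspace_span)
  moreover have "C \<noteq> {0}" using rho0 rhoC[OF k0] by blast
  ultimately have "is_code C k d" unfolding is_code_def using dimC mwC by blast
  moreover have "herm_LCD C" unfolding herm_LCD_def by (rule lcd)
  ultimately show ?thesis by blast
qed

definition A1 :: "gf4 list list" where
  "A1 = [[WW4,Z4,O4,W4,O4,Z4,O4,W4,W4,WW4],
    [O4,W4,Z4,O4,Z4,O4,O4,WW4,W4,WW4],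
    [W4,O4,WW4,Z4,O4,W4,WW4,Z4,O4,W4],
    [W4,WW4,WW4,Z4,W4,WW4,W4,WW4,WW4,W4],
    [O4,W4,O4,WW4,Z4,W4,W4,WW4,Z4,O4],
    [W4,Z4,O4,Z4,O4,O4,WW4,W4,WW4,O4],
    [Z4,O4,W4,Z4,O4,WW4,O4,O4,WW4,W4],
    [O4,WW4,Z4,O4,W4,WW4,Z4,O4,W4,W4],
    [O4,Z4,O4,W4,Z4,W4,WW4,O4,O4,WW4],
    [Z4,O4,Z4,O4,W4,WW4,W4,WW4,O4,O4],
    [WW4,WW4,Z4,W4,W4,W4,WW4,WW4,W4,WW4],
    [WW4,Z4,W4,W4,WW4,WW4,WW4,W4,WW4,W4],
    [Z4,W4,W4,WW4,WW4,WW4,W4,WW4,W4,WW4],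
    [Z4,O4,W4,O4,WW4,O4,W4,W4,WW4,Z4],
    [W4,W4,WW4,WW4,Z4,W4,WW4,W4,WW4,WW4]]"

definition A2 :: "gf4 list list" where
  "A2 = [[W4,O4,Z4,WW4,WW4,W4,O4,O4,Z4,WW4],
    [WW4,W4,O4,WW4,W4,O4,Z4,Z4,WW4,WW4],
    [Z4,O4,O4,W4,Z4,Z4,Z4,W4,O4,WW4],
    [O4,W4,W4,Z4,Z4,W4,WW4,W4,WW4,WW4],
    [W4,Z4,O4,Z4,O4,W4,WW4,Z4,O4,Z4],
    [WW4,W4,W4,O4,WW4,W4,W4,Z4,W4,W4],
    [Z4,W4,W4,W4,O4,O4,WW4,Z4,O4,WW4],
    [W4,O4,Z4,W4,O4,WW4,W4,WW4,O4,O4],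
    [O4,WW4,WW4,WW4,W4,WW4,Z4,O4,WW4,Z4],
    [WW4,WW4,WW4,WW4,WW4,O4,Z4,WW4,W4,O4],
    [O4,W4,W4,WW4,W4,O4,W4,O4,O4,WW4],
    [W4,WW4,O4,O4,W4,WW4,WW4,WW4,W4,W4],
    [WW4,O4,W4,O4,WW4,WW4,WW4,WW4,W4,O4],
    [O4,Z4,Z4,O4,O4,W4,WW4,O4,W4,Z4],
    [WW4,WW4,W4,W4,W4,W4,W4,O4,W4,WW4]]"

definition A3 :: "gf4 list list" where
  "A3 = [[O4,W4,O4,W4,Z4,WW4,Z4,Z4,O4,Z4],
    [WW4,Z4,O4,W4,W4,O4,WW4,W4,W4,Z4],
    [Z4,O4,W4,Z4,W4,W4,O4,WW4,WW4,W4],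
    [W4,WW4,O4,O4,Z4,W4,O4,W4,Z4,WW4],
    [W4,W4,Z4,WW4,WW4,O4,W4,WW4,Z4,W4],
    [O4,O4,WW4,O4,W4,Z4,O4,W4,WW4,WW4],
    [Z4,O4,WW4,W4,WW4,W4,Z4,W4,WW4,WW4],
    [Z4,Z4,O4,Z4,O4,O4,O4,O4,O4,W4],
    [O4,Z4,Z4,O4,O4,O4,O4,W4,O4,Z4],
    [O4,O4,W4,O4,W4,WW4,WW4,WW4,W4,WW4],
    [W4,O4,WW4,WW4,O4,Z4,O4,WW4,W4,O4],
    [O4,W4,W4,W4,W4,WW4,W4,W4,W4,Z4],
    [WW4,O4,Z4,Z4,WW4,W4,W4,Z4,W4,Z4],
    [O4,WW4,Z4,Z4,WW4,W4,Z4,Z4,WW4,O4],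
    [O4,O4,O4,WW4,WW4,O4,WW4,WW4,O4,W4]]"

definition A4 :: "gf4 list list" where
  "A4 = [[W4,WW4,O4,Z4,WW4,Z4,W4,O4,O4,WW4],
    [O4,W4,Z4,WW4,WW4,O4,WW4,Z4,W4,WW4],
    [O4,O4,W4,W4,Z4,WW4,W4,Z4,WW4,O4],
    [Z4,Z4,W4,W4,W4,O4,O4,WW4,WW4,W4],
    [WW4,WW4,Z4,W4,WW4,Z4,O4,WW4,Z4,Z4],
    [Z4,WW4,O4,O4,W4,WW4,Z4,Z4,O4,Z4],
    [WW4,Z4,WW4,O4,O4,W4,Z4,W4,O4,W4],
    [WW4,O4,Z4,Z4,W4,WW4,Z4,WW4,WW4,WW4],
    [Z4,WW4,Z4,WW4,WW4,O4,WW4,W4,O4,Z4],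
    [W4,WW4,WW4,Z4,WW4,WW4,WW4,Z4,O4,Z4],
    [WW4,WW4,O4,Z4,W4,O4,O4,W4,O4,WW4],
    [Z4,O4,O4,WW4,W4,O4,O4,W4,Z4,W4],
    [W4,WW4,O4,W4,Z4,Z4,Z4,WW4,Z4,WW4],
    [O4,O4,WW4,WW4,Z4,WW4,O4,WW4,Z4,Z4],
    [W4,O4,WW4,O4,O4,Z4,W4,WW4,O4,Z4]]"

definition N12 :: "gf4 list list" where
  "N12 = [[Z4,O4,W4,O4,Z4,Z4,Z4,Z4,WW4,Z4,Z4,W4],
    [O4,O4,WW4,O4,W4,O4,WW4,WW4,W4,O4,W4,WW4],
    [WW4,W4,Z4,W4,WW4,WW4,WW4,W4,W4,Z4,WW4,WW4],
    [O4,O4,WW4,Z4,W4,W4,O4,WW4,W4,WW4,W4,WW4],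
    [Z4,WW4,W4,WW4,Z4,WW4,W4,O4,WW4,WW4,WW4,W4],
    [Z4,O4,W4,WW4,W4,O4,W4,O4,WW4,WW4,O4,O4],
    [Z4,W4,W4,O4,WW4,WW4,O4,Z4,O4,O4,WW4,Z4],
    [Z4,W4,WW4,W4,O4,O4,Z4,Z4,O4,W4,O4,O4],
    [W4,WW4,WW4,WW4,W4,W4,O4,O4,O4,W4,O4,O4],
    [Z4,O4,Z4,W4,W4,W4,O4,WW4,WW4,Z4,Z4,WW4],
    [Z4,WW4,W4,WW4,W4,O4,W4,O4,O4,Z4,Z4,O4],
    [WW4,W4,W4,W4,WW4,O4,Z4,O4,O4,W4,O4,Z4]]"

definition N13 :: "gf4 list list" where
  "N13 = [[O4,WW4,WW4,W4,W4,WW4,W4,O4,W4,Z4,WW4,WW4,WW4],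
    [W4,Z4,Z4,WW4,WW4,WW4,W4,Z4,O4,O4,Z4,Z4,W4],
    [W4,Z4,O4,O4,O4,Z4,O4,WW4,WW4,Z4,Z4,W4,WW4],
    [WW4,W4,O4,O4,O4,WW4,W4,O4,Z4,WW4,WW4,O4,O4],
    [WW4,W4,O4,O4,O4,O4,WW4,W4,Z4,WW4,O4,O4,W4],
    [W4,W4,Z4,W4,O4,Z4,O4,WW4,O4,WW4,Z4,WW4,O4],
    [WW4,WW4,O4,WW4,W4,O4,Z4,WW4,W4,O4,O4,WW4,W4],
    [O4,Z4,W4,O4,WW4,W4,W4,O4,Z4,W4,W4,Z4,WW4],
    [WW4,O4,W4,Z4,Z4,O4,WW4,Z4,Z4,W4,W4,Z4,WW4],
    [Z4,O4,Z4,W4,W4,W4,O4,WW4,WW4,Z4,Z4,WW4,Z4],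
    [W4,Z4,Z4,W4,O4,Z4,O4,WW4,WW4,Z4,O4,WW4,O4],
    [W4,Z4,WW4,O4,O4,W4,W4,Z4,Z4,W4,W4,O4,WW4],
    [W4,WW4,W4,O4,WW4,O4,WW4,W4,W4,Z4,O4,W4,O4]]"

definition N14 :: "gf4 list list" where
  "N14 = [[Z4,WW4,O4,Z4,O4,Z4,Z4,WW4,W4,Z4,Z4,Z4,W4,W4],
    [W4,Z4,Z4,WW4,WW4,WW4,W4,Z4,O4,O4,Z4,Z4,W4,Z4],
    [O4,Z4,Z4,Z4,WW4,W4,Z4,W4,WW4,Z4,W4,Z4,Z4,O4],
    [Z4,W4,Z4,Z4,WW4,O4,WW4,Z4,Z4,WW4,O4,WW4,W4,O4],
    [O4,W4,W4,W4,Z4,Z4,Z4,O4,Z4,WW4,Z4,Z4,Z4,WW4],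
    [Z4,W4,WW4,O4,Z4,O4,W4,Z4,O4,WW4,O4,W4,WW4,WW4],
    [Z4,WW4,Z4,W4,Z4,WW4,O4,W4,W4,O4,WW4,O4,O4,O4],
    [W4,Z4,WW4,Z4,O4,Z4,WW4,Z4,Z4,W4,Z4,W4,Z4,O4],
    [WW4,O4,W4,Z4,Z4,O4,WW4,Z4,Z4,W4,W4,Z4,WW4,Z4],
    [Z4,O4,Z4,W4,W4,W4,O4,WW4,WW4,Z4,Z4,WW4,Z4,Z4],
    [Z4,Z4,WW4,O4,Z4,O4,W4,Z4,WW4,Z4,Z4,W4,WW4,WW4],
    [Z4,Z4,Z4,W4,Z4,WW4,O4,WW4,Z4,W4,WW4,Z4,O4,WW4],
    [WW4,WW4,Z4,WW4,Z4,W4,O4,Z4,W4,Z4,W4,O4,Z4,W4],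
    [WW4,Z4,O4,O4,W4,W4,O4,O4,Z4,Z4,W4,W4,WW4,O4]]"

definition N15 :: "gf4 list list" where
  "N15 = [[Z4,WW4,O4,Z4,O4,Z4,Z4,WW4,W4,Z4,Z4,Z4,W4,W4,Z4],
    [W4,Z4,Z4,WW4,WW4,WW4,W4,Z4,O4,O4,Z4,Z4,W4,Z4,Z4],
    [O4,Z4,Z4,Z4,WW4,W4,Z4,W4,WW4,Z4,W4,Z4,Z4,O4,Z4],
    [Z4,W4,Z4,O4,WW4,Z4,Z4,Z4,Z4,WW4,WW4,O4,O4,Z4,W4],
    [O4,W4,W4,W4,Z4,Z4,Z4,O4,Z4,WW4,Z4,Z4,Z4,WW4,Z4],
    [Z4,W4,WW4,Z4,Z4,Z4,O4,Z4,O4,WW4,WW4,Z4,Z4,W4,W4],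
    [Z4,WW4,Z4,Z4,Z4,O4,Z4,W4,W4,O4,Z4,W4,Z4,WW4,WW4],
    [W4,Z4,WW4,Z4,O4,Z4,WW4,Z4,Z4,W4,Z4,W4,Z4,O4,Z4],
    [WW4,O4,W4,Z4,Z4,O4,WW4,Z4,Z4,W4,W4,Z4,WW4,Z4,Z4],
    [Z4,O4,Z4,W4,W4,W4,O4,WW4,WW4,Z4,Z4,WW4,Z4,Z4,Z4],
    [Z4,Z4,WW4,W4,Z4,W4,Z4,Z4,WW4,Z4,O4,WW4,O4,Z4,O4],
    [Z4,Z4,Z4,O4,Z4,Z4,WW4,WW4,Z4,W4,W4,O4,WW4,Z4,O4],
    [WW4,WW4,Z4,O4,Z4,Z4,Z4,Z4,W4,Z4,O4,W4,O4,Z4,WW4],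
    [WW4,Z4,O4,Z4,W4,WW4,W4,O4,Z4,Z4,Z4,Z4,Z4,Z4,W4],
    [Z4,Z4,Z4,WW4,Z4,WW4,W4,Z4,Z4,Z4,O4,O4,W4,WW4,O4]]"

definition mw :: "gf4 list" where
  "mw = [O4,Z4,W4,Z4,Z4,Z4,Z4,Z4,Z4,Z4,Z4,Z4]"

lemmas comp_simps = zero_gf4_def one_gf4_def plus_gf4_def times_gf4_def numeral_eq_Suc

lemma okA1: "allok 7 A1 3 0 (replicate 10 0)"
  unfolding A1_def by (simp add: comp_simps)
lemma okA2: "allok 7 A2 3 0 (replicate 10 0)"
  unfolding A2_def by (simp add: comp_simps)
lemma okA3: "allok 7 A3 3 0 (replicate 10 0)"
  unfolding A3_def by (simp add: comp_simps)
lemma okA4: "allok 7 A4 3 0 (replicate 10 0)"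
  unfolding A4_def by (simp add: comp_simps)

lemma lenA: "length A1 = 15" "length A2 = 15" "length A3 = 15" "length A4 = 15"
  by (simp_all add: A1_def A2_def A3_def A4_def)
lemma rowA: "\<forall>r\<in>set A1. length r = 10" "\<forall>r\<in>set A2. length r = 10"
  "\<forall>r\<in>set A3. length r = 10" "\<forall>r\<in>set A4. length r = 10"
  by (simp_all add: A1_def A2_def A3_def A4_def)

lemma cA2: "\<forall>v\<in>set (sysm 15 A1). blk2 v @ blk3 v = enc 10 A2 (blk1 v @ red v)"
  unfolding A1_def A2_def sysm_def idm_def blk_defs by (simp add: comp_simps upt_rec)
lemma cA3: "\<forall>v\<in>set (sysm 15 A1). blk1 v @ blk3 v = enc 10 A3 (blk2 v @ red v)"
  unfolding A1_def A3_def sysm_def idm_def blk_defs by (simp add: comp_simps upt_rec)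
lemma cA4: "\<forall>v\<in>set (sysm 15 A1). blk1 v @ blk2 v = enc 10 A4 (blk3 v @ red v)"
  unfolding A1_def A4_def sysm_def idm_def blk_defs by (simp add: comp_simps upt_rec)

lemma core: "\<forall>m. length m = 15 \<longrightarrow> m \<noteq> replicate 15 0 \<longrightarrow> 7 \<le> wt m + wt (enc 10 A1 m)"
  using core25[OF lenA rowA okA1 okA2 okA3 okA4 cA2 cA3 cA4] by blast

lemma enc_append_zeros:
  "length G = length m + j \<Longrightarrow> \<forall>r\<in>set G. length r = n \<Longrightarrow>
   enc n G (m @ replicate j 0) = enc n (take (length m) G) m"
proof (induction m arbitrary: G)
  case Nil
  then show ?case using enc_zero[of G n] by simp
next
  case (Cons a as)
  then obtain r rs where G: "G = r # rs" by (cases G) auto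
  then show ?case using Cons by simp
qed

lemma short:
  assumes "k \<le> 15"
  shows "\<forall>m. length m = k \<longrightarrow> m \<noteq> replicate k 0 \<longrightarrow> 7 \<le> wt (enc (k+10) (sysm k (take k A1)) m)"
proof (intro allI impI)
  fix m :: "gf4 list" assume m: "length m = k" "m \<noteq> replicate k 0"
  have lt: "length (take k A1) = k" using assms lenA by simp
  have rt: "\<forall>r\<in>set (take k A1). length r = 10" using rowA(1) by (meson in_set_takeD)
  have e: "enc (k+10) (sysm k (take k A1)) m = m @ enc 10 (take k A1) m"
    by (rule enc_sys[OF m(1) lt rt])
  define m' where "m' = m @ replicate (15 - k) 0"
  have e2: "enc 10 A1 m' = enc 10 (take k A1) m"
    using enc_append_zeros[of A1 m "15 - k" 10] lenA rowA m assms by (simp add: m'_def)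
  have lm': "length m' = 15" using m assms by (simp add: m'_def)
  have "m' \<noteq> replicate 15 0"
  proof
    assume "m' = replicate 15 0"
    then have "take k m' = take k (replicate 15 0)" by simp
    then show False using m assms by (simp add: m'_def)
  qed
  then have "7 \<le> wt m' + wt (enc 10 A1 m')" using core lm' by blast
  then show "7 \<le> wt (enc (k+10) (sysm k (take k A1)) m)" using e e2 by (simp add: m'_def)
qed

lemma inv12: "map (enc 12 (gram (sysm 12 (take 12 A1)))) N12 = idm 12"
  unfolding A1_def N12_def sysm_def idm_def gram_def by (simp add: comp_simps upt_rec)
lemma inv13: "map (enc 13 (gram (sysm 13 (take 13 A1)))) N13 = idm 13"
  unfolding A1_def N13_def sysm_def idm_def gram_def by (simp add: comp_simps upt_rec)
lemma inv14: "map (enc 14 (gram (sysm 14 (take 14 A1)))) N14 = idm 14"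
  unfolding A1_def N14_def sysm_def idm_def gram_def by (simp add: comp_simps upt_rec)
lemma inv15: "map (enc 15 (gram (sysm 15 (take 15 A1)))) N15 = idm 15"
  unfolding A1_def N15_def sysm_def idm_def gram_def by (simp add: comp_simps upt_rec)

lemma lenN: "length N12 = 12" "\<forall>x\<in>set N12. length x = 12"
  "length N13 = 13" "\<forall>x\<in>set N13. length x = 13"
  "length N14 = 14" "\<forall>x\<in>set N14. length x = 14"
  "length N15 = 15" "\<forall>x\<in>set N15. length x = 15"
  by (simp_all add: N12_def N13_def N14_def N15_def)

lemma wit12: "wt (enc (12+10) (sysm 12 (take 12 A1)) mw) = 7"
  unfolding A1_def mw_def sysm_def idm_def by (simp add: comp_simps upt_rec)
lemma wit13: "wt (enc (13+10) (sysm 13 (take 13 A1)) (mw @ [Z4])) = 7"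
  unfolding A1_def mw_def sysm_def idm_def by (simp add: comp_simps upt_rec)
lemma wit14: "wt (enc (14+10) (sysm 14 (take 14 A1)) (mw @ [Z4,Z4])) = 7"
  unfolding A1_def mw_def sysm_def idm_def by (simp add: comp_simps upt_rec)
lemma wit15: "wt (enc (15+10) (sysm 15 (take 15 A1)) (mw @ [Z4,Z4,Z4])) = 7"
  unfolding A1_def mw_def sysm_def idm_def by (simp add: comp_simps upt_rec)
lemma lmw: "length mw = 12" by (simp add: mw_def)

lemma rowT: "\<forall>r\<in>set (take k A1). length r = 10" using rowA(1) by (meson in_set_takeD)

theorem lemma6p1:
  shows "(\<exists>C :: (gf4 ^ 22) set. is_code C 12 7 \<and> herm_LCD C)
       \<and> (\<exists>C :: (gf4 ^ 23) set. is_code C 13 7 \<and> herm_LCD C)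
       \<and> (\<exists>C :: (gf4 ^ 24) set. is_code C 14 7 \<and> herm_LCD C)
       \<and> (\<exists>C :: (gf4 ^ 25) set. is_code C 15 7 \<and> herm_LCD C)"
proof (intro conjI)
  show "\<exists>C :: (gf4 ^ 22) set. is_code C 12 7 \<and> herm_LCD C"
    by (rule code_generic[where r=10 and A="take 12 A1" and N=N12 and mw=mw])
       (use lenA rowT short[of 12] lmw wit12 lenN inv12 in simp_all)
  show "\<exists>C :: (gf4 ^ 23) set. is_code C 13 7 \<and> herm_LCD C"
    by (rule code_generic[where r=10 and A="take 13 A1" and N=N13 and mw="mw @ [Z4]"])
       (use lenA rowT short[of 13] lmw wit13 lenN inv13 in simp_all)
  show "\<exists>C :: (gf4 ^ 24) set. is_code C 14 7 \<and> herm_LCD C"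
    by (rule code_generic[where r=10 and A="take 14 A1" and N=N14 and mw="mw @ [Z4,Z4]"])
       (use lenA rowT short[of 14] lmw wit14 lenN inv14 in simp_all)
  show "\<exists>C :: (gf4 ^ 25) set. is_code C 15 7 \<and> herm_LCD C"
    by (rule code_generic[where r=10 and A="take 15 A1" and N=N15 and mw="mw @ [Z4,Z4,Z4]"])
       (use lenA rowA rowT short[of 15] lmw wit15 lenN inv15 in simp_all)
qed

end
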